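(* In the setting described in the context, fix $t_0\in(0,T_0)$ and let $w_i$ be as defined there. If $i\sim j$, then $\lim_{t\to T_0}|w_i(t)-w_j(t)|=0$.
   Context: Setting: $N,d\ge 1$, $\alpha\in(0,1)$, $\psi(s)=s^{-\alpha}$ ($s>0$), $\psi(0)=0$; $\psi_n(s)=\psi(s)$ for $s\ge(n-1)^{-1/\alpha}$, $\psi_n(s)=n$ for $s\le n^{-1/\alpha}$, smooth and monotone in between. Fix $T>0$ and initial data $x(0),v(0)\in\mathbb{R}^{Nd}$; let $x^n$ be the $C^2$ solution on $[0,T]$ of $\dot x^n_i=v^n_i$, $\dot v^n_i=\frac1N\sum_k(v^n_k-v^n_i)\psi_n(|x^n_i-x^n_k|)$ with these data. Pass to a subsequence (not relabeled) with $x^n\to x$ uniformly on $[0,T]$. Let $B_i(0)=\{k: x_k(0)\ne x_i(0)\text{ or }v_k(0)\ne v_i(0)\}$ and $T_0:=\inf\{t>0:\min_{i,\ j\in B_i(0)}\lim_{n}|x^n_i(t)-x^n_j(t)|=0\}$; assume $T_0\le T$. Assume moreover (after a further subsequence) that $x^n\to x$ in $C^1([0,t])$ for every $t<T_0$, and set $v=\dot x$ on $[0,T_0)$. Define $i\,\dot\sim\, j$ iff $j\notin B_i(0)$ or $\int_t^{T_0}\psi(|x_i(s)-x_j(s)|)ds=\infty$ for all $t<T_0$; let $\sim$ be the equivalence relation generated by $\dot\sim$ (its transitive closure), with classes $[i]$. For fixed $t_0\in(0,T_0)$, $w_i=w_i^{t_0}$ ($i=1,\dots,N$) is the solution on $[t_0,T_0)$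 of $\dot w_i=\frac1N\sum_{k\in[i]}(w_k-w_i)\psi(|x_i-x_k|)$ with $w_i(t_0)=v_i(t_0)$. *)

theory Defs
  imports "HOL-Analysis.Analysis"
begin

definition psi :: "real \<Rightarrow> real \<Rightarrow> real" where
  "psi \<alpha> s = (if s > 0 then s powr (- \<alpha>) else 0)"

definition smooth_on :: "real set \<Rightarrow> (real \<Rightarrow> real) \<Rightarrow> bool" where
  "smooth_on S f \<longleftrightarrow> (\<forall>m. \<forall>s\<in>S. ((deriv ^^ m) f) differentiable (at s))"

definition psi_reg :: "real \<Rightarrow> (nat \<Rightarrow> real \<Rightarrow> real) \<Rightarrow> bool" where
  "psi_reg \<alpha> \<psi>n \<longleftrightarrow> (\<forall>n\<ge>2.
      (\<forall>s. s \<ge> real (n - 1) powr (- 1 / \<alpha>) \<longrightarrow> \<psi>n n s = psi \<alpha> s)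
    \<and> (\<forall>s. 0 \<le> s \<and> s \<le> real n powr (- 1 / \<alpha>) \<longrightarrow> \<psi>n n s = real n)
    \<and> smooth_on {0<..} (\<psi>n n)
    \<and> antimono_on {real n powr (- 1 / \<alpha>) .. real (n - 1) powr (- 1 / \<alpha>)} (\<psi>n n))"

definition Bset :: "nat \<Rightarrow> (nat \<Rightarrow> real^'d::finite) \<Rightarrow> (nat \<Rightarrow> real^'d) \<Rightarrow> nat \<Rightarrow> nat set"
  where "Bset N x0 v0 i = {k. k < N \<and> (x0 k \<noteq> x0 i \<or> v0 k \<noteq> v0 i)}"

definition dsim :: "nat \<Rightarrow> (nat \<Rightarrow> real^'d::finite) \<Rightarrow> (nat \<Rightarrow> real^'d) \<Rightarrow> real
    \<Rightarrow> (real \<Rightarrow> nat \<Rightarrow> real^'d) \<Rightarrow> real \<Rightarrow> nat \<Rightarrow> nat \<Rightarrow> bool" where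
  "dsim N x0 v0 \<alpha> x T0 i j \<longleftrightarrow> i < N \<and> j < N \<and>
     (j \<notin> Bset N x0 v0 i \<or>
      (\<forall>t<T0. (\<integral>\<^sup>+ s\<in>{t..T0}. ennreal (psi \<alpha> (norm (x s i - x s j))) \<partial>lborel) = \<infinity>))"

definition csim :: "nat \<Rightarrow> (nat \<Rightarrow> real^'d::finite) \<Rightarrow> (nat \<Rightarrow> real^'d) \<Rightarrow> real
    \<Rightarrow> (real \<Rightarrow> nat \<Rightarrow> real^'d) \<Rightarrow> real \<Rightarrow> nat \<Rightarrow> nat \<Rightarrow> bool" where
  "csim N x0 v0 \<alpha> x T0 = equivclp (dsim N x0 v0 \<alpha> x T0)"

definition cls :: "nat \<Rightarrow> (nat \<Rightarrow> real^'d::finite) \<Rightarrow> (nat \<Rightarrow> real^'d) \<Rightarrow> real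
    \<Rightarrow> (real \<Rightarrow> nat \<Rightarrow> real^'d) \<Rightarrow> real \<Rightarrow> nat \<Rightarrow> nat set" where
  "cls N x0 v0 \<alpha> x T0 i = {k. k < N \<and> csim N x0 v0 \<alpha> x T0 i k}"

end

theory Submission
  imports Defs "HOL-Analysis.Analysis"
begin


lemma antimono_by_deriv:
  fixes f f' :: "real \<Rightarrow> real"
  assumes d: "\<And>u. u \<in> {a..<b} \<Longrightarrow> (f has_real_derivative f' u) (at u within {a..<b})"
    and nz: "\<And>u. u \<in> {a..<b} \<Longrightarrow> f' u \<le> 0"
    and st: "a \<le> s" "s \<le> t" "t < b"
  shows "f t \<le> f s"
proof (cases "s = t")
  case True then show ?thesis by simp
next
  case False
  then have "s < t" using st by simp
  have "\<And>x. s \<le> x \<Longrightarrow> x \<le> t \<Longrightarrow> (f has_derivative (\<lambda>h. f' x * h)) (at x within {s..t})"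
  proof -
    fix x assume "s \<le> x" "x \<le> t"
    then have x: "x \<in> {s..t}" by auto
    then have "x \<in> {a..<b}" using st by auto
    from d[OF this] have "(f has_real_derivative f' x) (at x within {s..t})"
      by (rule DERIV_subset) (use st in auto)
    then show "(f has_derivative (\<lambda>h. f' x * h)) (at x within {s..t})"
      by (simp add: has_field_derivative_def)
  qed
  from mvt_simple[OF \<open>s < t\<close> this] obtain x where x: "x \<in> {s<..<t}" "f t - f s = f' x * (t - s)"
    by auto
  have "f' x \<le> 0" using nz x st by auto
  with x \<open>s<t\<close> show ?thesis by (smt (verit) mult_nonpos_nonneg)
qed

lemma antimono_tendsto_at_left:
  fixes f :: "real \<Rightarrow> real"
  assumes am: "\<And>s t. a \<le> s \<Longrightarrow> s \<le> t \<Longrightarrow> t < b \<Longrightarrow> f t \<le> f s"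
    and lb: "\<And>t. a \<le> t \<Longrightarrow> t < b \<Longrightarrow> c \<le> f t" and ab: "a < b"
  shows "\<exists>L. (f \<longlongrightarrow> L) (at_left b)"
proof -
  define L where "L = Inf (f ` {a..<b})"
  have bdd: "bdd_below (f ` {a..<b})" using lb by (auto intro!: bdd_belowI)
  have ne: "f ` {a..<b} \<noteq> {}" using ab by auto
  have le: "L \<le> f t" if "a \<le> t" "t < b" for t
    unfolding L_def using bdd that by (auto intro!: cInf_lower)
  have "(f \<longlongrightarrow> L) (at_left b)"
  proof (rule order_tendstoI)
    fix y assume "y < L"
    show "eventually (\<lambda>t. y < f t) (at_left b)"
      unfolding eventually_at_left[OF ab]
      using \<open>y < L\<close> le ab by (intro exI[of _ a]) (auto intro: less_le_trans)
  next
    fix y assume "L < y"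
    then obtain t where t: "t \<in> {a..<b}" "f t < y"
      using cInf_lessD[OF ne, of y] unfolding L_def by auto
    show "eventually (\<lambda>u. f u < y) (at_left b)"
      unfolding eventually_at_left[OF ab]
      using t by (intro exI[of _ t]) (auto intro: le_less_trans[OF am])
  qed
  then show ?thesis by blast
qed


lemma max_family_antimono:
  fixes f f' :: "'i \<Rightarrow> real \<Rightarrow> real"
  assumes F: "finite F" "F \<noteq> {}"
   and d: "\<And>A u. A\<in>F \<Longrightarrow> u\<in>{a..<b} \<Longrightarrow> (f A has_real_derivative f' A u) (at u within {a..<b})"
   and nz: "\<And>A u. A\<in>F \<Longrightarrow> u\<in>{a..<b} \<Longrightarrow> f A u = Max ((\<lambda>B. f B u) ` F) \<Longrightarrow> f' A u \<le> 0"
   and st: "a \<le> s" "s \<le> t" "t < b"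
  shows "Max ((\<lambda>B. f B t) ` F) \<le> Max ((\<lambda>B. f B s) ` F)"
proof -
  define M where "M u = Max ((\<lambda>B. f B u) ` F)" for u
  have Mle: "M u \<le> c \<longleftrightarrow> (\<forall>A\<in>F. f A u \<le> c)" for u c
    unfolding M_def using F by simp
  have fleM: "A \<in> F \<Longrightarrow> f A u \<le> M u" for A u
    unfolding M_def using F by simp
  have cont: "continuous_on {a..<b} (f A)" if "A \<in> F" for A
    by (rule DERIV_continuous_on) (rule d[OF that])
  have claim: "M t \<le> M s + e * (t - s)" if e: "e > 0" for e
  proof -
    define S where "S = {u\<in>{s..t}. M u \<le> M s + e * (u - s)}"
    have S_eq: "S = (\<Inter>A\<in>F. {u\<in>{s..t}. f A u \<le> M s + e * (u - s)})"
      unfolding S_def Mle using F by auto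
    have "closed S"
      unfolding S_eq
    proof (intro closed_INT ballI continuous_on_closed_Collect_le)
      fix A assume "A \<in> F"
      show "continuous_on {s..t} (f A)"
        by (rule continuous_on_subset[OF cont[OF \<open>A\<in>F\<close>]]) (use st in auto)
    qed (auto intro!: continuous_intros)
    have "s \<in> S" unfolding S_def using st by auto
    then have Sne: "S \<noteq> {}" by auto
    have bdd: "bdd_above S" unfolding S_def by (auto intro!: bdd_aboveI[of _ t])
    define \<sigma> where "\<sigma> = Sup S"
    have \<sigma>S: "\<sigma> \<in> S" unfolding \<sigma>_def by (rule closed_contains_Sup[OF Sne bdd \<open>closed S\<close>])
    then have \<sigma>st: "s \<le> \<sigma>" "\<sigma> \<le> t" and M\<sigma>: "M \<sigma> \<le> M s + e * (\<sigma> - s)" unfolding S_def by auto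
    have upper: "u \<le> \<sigma>" if "u \<in> S" for u unfolding \<sigma>_def using bdd that by (simp add: cSup_upper)
    have "\<sigma> = t"
    proof (rule ccontr)
      assume "\<sigma> \<noteq> t"
      then have lt: "\<sigma> < t" using \<sigma>st by simp
      have \<sigma>ab: "\<sigma> \<in> {a..<b}" using \<sigma>st st by auto
      have ev: "\<forall>A\<in>F. eventually (\<lambda>u. \<sigma> < u \<longrightarrow> f A u \<le> M \<sigma> + e * (u - \<sigma>)) (at \<sigma> within {a..<b})"
      proof
        fix A assume A: "A \<in> F"
        show "eventually (\<lambda>u. \<sigma> < u \<longrightarrow> f A u \<le> M \<sigma> + e * (u - \<sigma>)) (at \<sigma> within {a..<b})"
        proof (cases "f A \<sigma> < M \<sigma>")
          case True
          have "(f A \<longlongrightarrow> f A \<sigma>) (at \<sigma> within {a..<b})"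
            using cont[OF A] \<sigma>ab by (simp add: continuous_on_def)
          from order_tendstoD(2)[OF this True]
          show ?thesis
          proof (rule eventually_mono, intro impI)
            fix u assume h: "f A u < M \<sigma>" "\<sigma> < u"
            then have "0 \<le> e * (u - \<sigma>)" using e by simp
            then show "f A u \<le> M \<sigma> + e * (u - \<sigma>)" using h by linarith
          qed
        next
          case False
          then have eq: "f A \<sigma> = M \<sigma>" using fleM[OF A, of \<sigma>] by simp
          then have "f' A \<sigma> \<le> 0" using nz[OF A \<sigma>ab] unfolding M_def by simp
          have "((\<lambda>y. (f A y - f A \<sigma>) / (y - \<sigma>)) \<longlongrightarrow> f' A \<sigma>) (at \<sigma> within {a..<b})"
            using d[OF A \<sigma>ab] by (simp add: has_field_derivative_iff)
          from order_tendstoD(2)[OF this, of e] \<open>f' A \<sigma> \<le> 0\<close> e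
          have "eventually (\<lambda>y. (f A y - f A \<sigma>) / (y - \<sigma>) < e) (at \<sigma> within {a..<b})" by simp
          then show ?thesis
          proof (rule eventually_mono, intro impI)
            fix y assume h: "(f A y - f A \<sigma>) / (y - \<sigma>) < e" "\<sigma> < y"
            then have "f A y - f A \<sigma> < e * (y - \<sigma>)" by (simp add: divide_less_eq)
            then show "f A y \<le> M \<sigma> + e * (y - \<sigma>)" using eq by simp
          qed
        qed
      qed
      have "eventually (\<lambda>u. \<forall>A\<in>F. \<sigma> < u \<longrightarrow> f A u \<le> M \<sigma> + e * (u - \<sigma>)) (at \<sigma> within {a..<b})"
        by (rule eventually_ball_finite[OF F(1) ev])
      then obtain dd where dd: "dd > 0" and H0: "\<forall>u\<in>{a..<b}. u \<noteq> \<sigma> \<and> dist u \<sigma> < dd \<longrightarrow>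
          (\<forall>A\<in>F. \<sigma> < u \<longrightarrow> f A u \<le> M \<sigma> + e * (u - \<sigma>))"
        unfolding eventually_at by (elim exE conjE) blast
      have H: "\<And>u. u \<in> {a..<b} \<Longrightarrow> 0 < dist u \<sigma> \<Longrightarrow> dist u \<sigma> < dd \<Longrightarrow>
          (\<forall>A\<in>F. \<sigma> < u \<longrightarrow> f A u \<le> M \<sigma> + e * (u - \<sigma>))" using H0 by (simp add: dist_real_def)
      define u where "u = min (\<sigma> + dd/2) t"
      have u: "\<sigma> < u" "u \<le> t" "u < \<sigma> + dd" using lt dd unfolding u_def by auto
      have "u \<in> {a..<b}" using u \<sigma>st st by auto
      moreover have "0 < dist u \<sigma>" "dist u \<sigma> < dd" using u by (auto simp: dist_real_def)
      ultimately have "\<forall>A\<in>F. f A u \<le> M \<sigma> + e * (u - \<sigma>)" using H u by blast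
      then have "M u \<le> M \<sigma> + e * (u - \<sigma>)" using Mle by blast
      also have "\<dots> \<le> M s + e * (u - s)" using M\<sigma> by (simp add: algebra_simps)
      finally have "u \<in> S" unfolding S_def using u \<sigma>st by auto
      then show False using upper u by fastforce
    qed
    then show ?thesis using M\<sigma> by simp
  qed
  show ?thesis
  proof (rule ccontr)
    assume "\<not> ?thesis"
    then have gt: "M s < M t" unfolding M_def by simp
    then have "s < t" using st by (cases "s = t") auto
    define e where "e = (M t - M s) / (2 * (t - s))"
    have "e > 0" unfolding e_def using gt \<open>s<t\<close> by simp
    have eq: "e * (t - s) = (M t - M s) / 2" unfolding e_def using \<open>s<t\<close> by (simp add: field_simps)
    have "M t \<le> M s + (M t - M s) / 2" using claim[OF \<open>e > 0\<close>] by (simp only: eq)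
    then have "(M t - M s) / 2 \<le> 0" by (simp add: field_simps)
    with gt show False by (simp add: field_simps)
  qed
qed


locale cons =
  fixes y :: "nat \<Rightarrow> real \<Rightarrow> real" and a :: "nat \<Rightarrow> nat \<Rightarrow> real \<Rightarrow> real"
    and C :: "nat set" and t0 T0 :: real
  assumes finC: "finite C" and tT: "t0 < T0"
    and a_nn: "\<And>k l t. 0 \<le> a k l t"
    and a_sym: "\<And>k l t. a k l t = a l k t"
    and dy: "\<And>k t. k \<in> C \<Longrightarrow> t \<in> {t0..<T0} \<Longrightarrow>
       (y k has_real_derivative (\<Sum>l\<in>C. a k l t * (y l t - y k t))) (at t within {t0..<T0})"
begin

lemma inner_cancel:
  assumes "finite A"
  shows "(\<Sum>k\<in>A. \<Sum>l\<in>A. a k l t * (y l t - y k t)) = 0"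
proof -
  have "(\<Sum>k\<in>A. \<Sum>l\<in>A. a k l t * y l t) = (\<Sum>l\<in>A. \<Sum>k\<in>A. a k l t * y l t)"
    by (rule sum.swap)
  also have "\<dots> = (\<Sum>k\<in>A. \<Sum>l\<in>A. a k l t * y k t)"
    by (simp add: a_sym)
  finally show ?thesis by (simp add: right_diff_distrib sum_subtractf)
qed

definition ysum :: "nat set \<Rightarrow> real \<Rightarrow> real" where
  "ysum A t = (\<Sum>k\<in>A. y k t)"

lemma ysum_deriv:
  assumes A: "A \<subseteq> C" and t: "t \<in> {t0..<T0}"
  shows "(ysum A has_real_derivative (\<Sum>k\<in>A. \<Sum>l\<in>C-A. a k l t * (y l t - y k t)))
           (at t within {t0..<T0})"
proof -
  have fA: "finite A" using A finC finite_subset by blast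
  have "(ysum A has_real_derivative (\<Sum>k\<in>A. \<Sum>l\<in>C. a k l t * (y l t - y k t))) (at t within {t0..<T0})"
    unfolding ysum_def[abs_def]
    by (rule DERIV_sum) (use A t dy in auto)
  moreover have "(\<Sum>k\<in>A. \<Sum>l\<in>C. a k l t * (y l t - y k t))
      = (\<Sum>k\<in>A. \<Sum>l\<in>C-A. a k l t * (y l t - y k t)) + (\<Sum>k\<in>A. \<Sum>l\<in>A. a k l t * (y l t - y k t))"
  proof -
    have "\<And>k. (\<Sum>l\<in>C. a k l t * (y l t - y k t)) = (\<Sum>l\<in>C-A. a k l t * (y l t - y k t)) + (\<Sum>l\<in>A. a k l t * (y l t - y k t))"
      using sum.subset_diff[OF A finC] by simp
    then show ?thesis by (simp add: sum.distrib)
  qed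
  ultimately show ?thesis using inner_cancel[OF fA] by simp
qed

definition F :: "nat \<Rightarrow> nat set set" where
  "F m = {A. A \<subseteq> C \<and> card A = m}"

definition S :: "nat \<Rightarrow> real \<Rightarrow> real" where
  "S m t = Max ((\<lambda>A. ysum A t) ` F m)"

lemma F_finite: "finite (F m)"
  unfolding F_def using finC by (auto intro: finite_subset[of _ "Pow C"])

lemma F_ne: "m \<le> card C \<Longrightarrow> F m \<noteq> {}"
  unfolding F_def using obtain_subset_with_card_n by (metis (mono_tags, lifting) empty_iff mem_Collect_eq)

lemma ysum_le_S: "A \<in> F m \<Longrightarrow> ysum A t \<le> S m t"
  unfolding S_def using F_finite by simp

lemma swap_le:
  assumes "A \<subseteq> C" "k \<in> A" "l \<in> C - A" "ysum A t = S (card A) t"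
  shows "y l t \<le> y k t"
proof -
  define B where "B = insert l (A - {k})"
  have fA: "finite A" using assms finC finite_subset by blast
  have "card A > 0" using fA assms(2) card_gt_0_iff by blast
  then have "B \<in> F (card A)" unfolding F_def B_def using assms fA
    by (auto simp: card_insert_if card_Diff_singleton)
  then have "ysum B t \<le> ysum A t" using ysum_le_S assms(4) by simp
  moreover have "ysum B t = ysum A t - y k t + y l t"
    unfolding ysum_def B_def using assms fA
    by (simp add: sum.remove[of A k] )
  ultimately show ?thesis by simp
qed

lemma S_antimono:
  assumes m: "m \<le> card C" and st: "t0 \<le> s" "s \<le> t" "t < T0"
  shows "S m t \<le> S m s"
  unfolding S_def
proof (rule max_family_antimono[OF F_finite F_ne[OF m] _ _ st])
  fix A u assume A: "A \<in> F m" and u: "u \<in> {t0..<T0}"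
  then show "(ysum A has_real_derivative (\<Sum>k\<in>A. \<Sum>l\<in>C-A. a k l u * (y l u - y k u))) (at u within {t0..<T0})"
    unfolding F_def by (intro ysum_deriv) auto
  assume mx: "ysum A u = Max ((\<lambda>B. ysum B u) ` F m)"
  have AC: "A \<subseteq> C" and cA: "card A = m" using A unfolding F_def by auto
  show "(\<Sum>k\<in>A. \<Sum>l\<in>C-A. a k l u * (y l u - y k u)) \<le> 0"
  proof (intro sum_nonpos)
    fix k l assume k: "k \<in> A" and l: "l \<in> C - A"
    have "y l u \<le> y k u" using swap_le[OF AC k l] mx cA unfolding S_def by simp
    then show "a k l u * (y l u - y k u) \<le> 0" using a_nn by (simp add: mult_nonneg_nonpos)
  qed
qed

end


context cons begin

lemma y_cont: "k \<in> C \<Longrightarrow> continuous_on {t0..<T0} (y k)"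
  by (rule DERIV_continuous_on) (rule dy)

lemma neg_cons: "cons (\<lambda>k t. - y k t) a C t0 T0"
proof
  fix k t assume k: "k \<in> C" and t: "t \<in> {t0..<T0}"
  have eq: "(\<Sum>l\<in>C. a k l t * (- y l t - - y k t)) = - (\<Sum>l\<in>C. a k l t * (y l t - y k t))"
    by (simp add: sum_negf[symmetric] algebra_simps)
  show "((\<lambda>t. - y k t) has_real_derivative (\<Sum>l\<in>C. a k l t * (- y l t - - y k t))) (at t within {t0..<T0})"
    unfolding eq by (rule DERIV_minus[OF dy[OF k t]])
qed (use finC tT a_nn a_sym in auto)

lemma lower: "\<exists>\<mu>. \<forall>k\<in>C. \<forall>t\<in>{t0..<T0}. \<mu> \<le> y k t"
proof (cases "C = {}")
  case True then show ?thesis by auto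
next
  case False
  interpret neg: cons "\<lambda>k t. - y k t" a C t0 T0 by (rule neg_cons)
  have c1: "1 \<le> card C" using False finC by (simp add: Suc_le_eq card_gt_0_iff)
  have "\<forall>k\<in>C. \<forall>t\<in>{t0..<T0}. - neg.S 1 t0 \<le> y k t"
  proof (intro ballI)
    fix k t assume k: "k \<in> C" and t: "t \<in> {t0..<T0}"
    have "{k} \<in> neg.F 1" unfolding neg.F_def using k by auto
    then have "neg.ysum {k} t \<le> neg.S 1 t" by (rule neg.ysum_le_S)
    also have "\<dots> \<le> neg.S 1 t0" using neg.S_antimono[OF c1, of t0 t] t by auto
    finally show "- neg.S 1 t0 \<le> y k t" unfolding neg.ysum_def by simp
  qed
  then show ?thesis by blast
qed

definition \<mu> where "\<mu> = (SOME \<mu>. \<forall>k\<in>C. \<forall>t\<in>{t0..<T0}. \<mu> \<le> y k t)"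

lemma mu_le: "k \<in> C \<Longrightarrow> t \<in> {t0..<T0} \<Longrightarrow> \<mu> \<le> y k t"
  using someI_ex[OF lower] unfolding \<mu>_def by blast

lemma S_lower:
  assumes m: "m \<le> card C" and t: "t \<in> {t0..<T0}"
  shows "real m * \<mu> \<le> S m t"
proof -
  obtain A where A: "A \<in> F m" using F_ne[OF m] by auto
  then have AC: "A \<subseteq> C" "card A = m" unfolding F_def by auto
  have "real m * \<mu> = (\<Sum>k\<in>A. \<mu>)" using AC by simp
  also have "\<dots> \<le> ysum A t" unfolding ysum_def using AC mu_le t by (intro sum_mono) auto
  also have "\<dots> \<le> S m t" by (rule ysum_le_S[OF A])
  finally show ?thesis .
qed

lemma S_conv: "m \<le> card C \<Longrightarrow> \<exists>L. (S m \<longlongrightarrow> L) (at_left T0)"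
  by (rule antimono_tendsto_at_left[where a=t0 and c="real m * \<mu>"])
     (use S_antimono S_lower tT in auto)

definition L where "L m = (SOME L. (S m \<longlongrightarrow> L) (at_left T0))"

lemma L_lim: "m \<le> card C \<Longrightarrow> (S m \<longlongrightarrow> L m) (at_left T0)"
  using someI_ex[OF S_conv] unfolding L_def by blast

lemma topset:
  assumes AC: "A \<subseteq> C" and ord: "\<And>p q. p \<in> A \<Longrightarrow> q \<in> C - A \<Longrightarrow> y q t \<le> y p t"
  shows "S (card A) t = ysum A t"
proof -
  have fA: "finite A" using AC finC finite_subset by blast
  have A_in: "A \<in> F (card A)" unfolding F_def using AC by auto
  have le: "ysum B t \<le> ysum A t" if B: "B \<in> F (card A)" for B
  proof -
    have BC: "B \<subseteq> C" and cB: "card B = card A" using B unfolding F_def by auto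
    have fB: "finite B" using BC finC finite_subset by blast
    have sB: "ysum B t = (\<Sum>k\<in>B \<inter> A. y k t) + (\<Sum>k\<in>B - A. y k t)"
      unfolding ysum_def using fB by (metis Int_Diff_Un Int_Diff_disjoint finite_Int finite_Diff sum.union_disjoint)
    have sA: "ysum A t = (\<Sum>k\<in>B \<inter> A. y k t) + (\<Sum>k\<in>A - B. y k t)"
      unfolding ysum_def using fA by (metis Int_commute Int_Diff_Un Int_Diff_disjoint finite_Int finite_Diff sum.union_disjoint)
    have cBA: "card B = card (B \<inter> A) + card (B - A)"
      using fB by (metis card_Un_disjoint Int_Diff_Un Int_Diff_disjoint finite_Int finite_Diff)
    have cAB: "card A = card (B \<inter> A) + card (A - B)"
      using fA by (metis Int_commute card_Un_disjoint Int_Diff_Un Int_Diff_disjoint finite_Int finite_Diff)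
    have cc: "card (B - A) = card (A - B)" using cBA cAB cB by simp
    show ?thesis
    proof (cases "A - B = {}")
      case True
      then have "card (B - A) = 0" using cc by (metis card.empty)
      then have "B - A = {}" using fB by simp
      with True show ?thesis using sA sB by simp
    next
      case False
      define c where "c = Min ((\<lambda>p. y p t) ` (A - B))"
      have fAB: "finite (A - B)" using fA by simp
      have "c \<in> (\<lambda>p. y p t) ` (A - B)" unfolding c_def using fAB False by (intro Min_in) auto
      then obtain p0 where p0: "p0 \<in> A - B" "y p0 t = c" by auto
      have "(\<Sum>k\<in>B - A. y k t) \<le> of_nat (card (B - A)) * c"
        by (rule sum_bounded_above) (use ord p0 BC in auto)
      also have "\<dots> = of_nat (card (A - B)) * c" using cc by simp
      also have "\<dots> \<le> (\<Sum>k\<in>A - B. y k t)"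
        by (rule sum_bounded_below) (use fAB c_def in auto)
      finally show ?thesis using sA sB by simp
    qed
  qed
  show ?thesis unfolding S_def
    by (rule Max_eqI) (use F_finite A_in le in auto)
qed

lemma sort_value:
  assumes k: "k \<in> C"
  shows "\<exists>m. 1 \<le> m \<and> m \<le> card C \<and> y k t = S m t - S (m - 1) t"
proof -
  define A1 where "A1 = {l\<in>C. y k t < y l t}"
  define A where "A = insert k A1"
  have A1C: "A1 \<subseteq> C" unfolding A1_def by auto
  have AC: "A \<subseteq> C" unfolding A_def using A1C k by auto
  have fA1: "finite A1" using A1C finC finite_subset by blast
  have kA1: "k \<notin> A1" unfolding A1_def by auto
  have cA: "card A = Suc (card A1)" unfolding A_def using fA1 kA1 by simp
  have SA: "S (card A) t = ysum A t"
    by (rule topset[OF AC]) (auto simp: A_def A1_def)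
  have SA1: "S (card A1) t = ysum A1 t"
    by (rule topset[OF A1C]) (auto simp: A1_def)
  have "ysum A t = y k t + ysum A1 t" unfolding A_def ysum_def using fA1 kA1 by simp
  moreover have "card A \<le> card C" using AC finC by (rule card_mono[rotated])
  ultimately show ?thesis using SA SA1 cA by (intro exI[of _ "card A"]) auto
qed

definition Lam where "Lam = (\<lambda>m. L m - L (m - 1)) ` {1..card C}"

lemma Lam_finite: "finite Lam" unfolding Lam_def by simp

lemma near_levels:
  assumes e: "e > 0"
  shows "eventually (\<lambda>t. \<forall>k\<in>C. \<exists>l\<in>Lam. \<bar>y k t - l\<bar> < e) (at_left T0)"
proof -
  have "\<forall>m\<in>{0..card C}. eventually (\<lambda>t. \<bar>S m t - L m\<bar> < e/2) (at_left T0)"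
  proof
    fix m assume "m \<in> {0..card C}"
    then have "(S m \<longlongrightarrow> L m) (at_left T0)" by (intro L_lim) auto
    then show "eventually (\<lambda>t. \<bar>S m t - L m\<bar> < e/2) (at_left T0)"
      unfolding tendsto_iff dist_real_def using e by (metis half_gt_zero)
  qed
  from eventually_ball_finite[OF _ this]
  have "eventually (\<lambda>t. \<forall>m\<in>{0..card C}. \<bar>S m t - L m\<bar> < e/2) (at_left T0)" by simp
  then show ?thesis
  proof (rule eventually_mono, intro ballI)
    fix t k assume H: "\<forall>m\<in>{0..card C}. \<bar>S m t - L m\<bar> < e/2" and k: "k \<in> C"
    obtain m where m: "1 \<le> m" "m \<le> card C" "y k t = S m t - S (m - 1) t"
      using sort_value[OF k] by blast
    have h: "\<bar>S m t - L m\<bar> < e/2" "\<bar>S (m-1) t - L (m-1)\<bar> < e/2" using H m by auto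
    have "\<bar>y k t - (L m - L (m - 1))\<bar> < e" unfolding m(3) using h by linarith
    moreover have "L m - L (m - 1) \<in> Lam" unfolding Lam_def using m by auto
    ultimately show "\<exists>l\<in>Lam. \<bar>y k t - l\<bar> < e" by blast
  qed
qed

end


context cons begin

lemma ev_left_E:
  assumes "eventually P (at_left T0)"
  obtains t1 where "t0 \<le> t1" "t1 < T0" "\<And>t. t1 \<le> t \<Longrightarrow> t < T0 \<Longrightarrow> P t"
proof -
  obtain b where b: "b < T0" "\<And>t. b < t \<Longrightarrow> t < T0 \<Longrightarrow> P t"
    using assms unfolding eventually_at_left[OF tT] by blast
  define t1 where "t1 = (max b t0 + T0) / 2"
  have "t0 \<le> t1" "t1 < T0" "b < t1" unfolding t1_def using b tT by auto
  then show ?thesis using b that by force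
qed

lemma delta_exists: "\<exists>\<delta>>0. \<forall>p\<in>Lam. \<forall>q\<in>Lam. p \<noteq> q \<longrightarrow> \<delta> \<le> \<bar>p - q\<bar>"
proof -
  define D where "D = (\<lambda>(p,q). \<bar>p - q\<bar>) ` {(p,q). p\<in>Lam \<and> q\<in>Lam \<and> p \<noteq> q}"
  have "finite {(p,q). p\<in>Lam \<and> q\<in>Lam \<and> p \<noteq> q}"
    by (rule finite_subset[of _ "Lam \<times> Lam"]) (use Lam_finite in auto)
  then have fD: "finite D" unfolding D_def by simp
  define \<delta> where "\<delta> = Min (insert 1 D)"
  have "0 < \<delta>" unfolding \<delta>_def using fD by (auto simp: D_def)
  moreover have "\<delta> \<le> \<bar>p - q\<bar>" if "p\<in>Lam" "q\<in>Lam" "p \<noteq> q" for p q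
    unfolding \<delta>_def using fD that by (intro Min_le) (auto simp: D_def)
  ultimately show ?thesis by blast
qed

lemma stay:
  assumes k: "k \<in> C" and \<delta>: "\<delta> > 0" and sep: "\<forall>p\<in>Lam. \<forall>q\<in>Lam. p \<noteq> q \<longrightarrow> \<delta> \<le> \<bar>p - q\<bar>"
    and e: "0 < e" "e \<le> \<delta>/3"
  shows "\<exists>l\<in>Lam. eventually (\<lambda>t. \<bar>y k t - l\<bar> < e) (at_left T0)"
proof -
  obtain t1 where t1: "t0 \<le> t1" "t1 < T0" and H: "\<And>t. t1 \<le> t \<Longrightarrow> t < T0 \<Longrightarrow> \<forall>k\<in>C. \<exists>l\<in>Lam. \<bar>y k t - l\<bar> < e"
    using ev_left_E[OF near_levels[OF e(1)]] by blast
  obtain l0 where l0: "l0 \<in> Lam" "\<bar>y k t1 - l0\<bar> < e" using H[of t1] t1 k by auto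
  have far: "\<bar>v - l'\<bar> \<ge> \<delta>/2" if "\<bar>v - l0\<bar> = \<delta>/2" "l' \<in> Lam" for v l'
  proof (cases "l' = l0")
    case True then show ?thesis using that by simp
  next
    case False
    then have "\<delta> \<le> \<bar>l' - l0\<bar>" using sep that l0 by blast
    then show ?thesis using that by linarith
  qed
  have claim: "\<bar>y k t - l0\<bar> < e" if t: "t1 \<le> t" "t < T0" for t
  proof (rule ccontr)
    assume nc: "\<not> ?thesis"
    obtain l where l: "l \<in> Lam" "\<bar>y k t - l\<bar> < e" using H[OF t] k by auto
    have "l \<noteq> l0" using l nc by auto
    then have dl: "\<delta> \<le> \<bar>l - l0\<bar>" using sep l l0 by blast
    have cont: "continuous_on {t1..t} (y k)"
      by (rule continuous_on_subset[OF y_cont[OF k]]) (use t t1 in auto)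
    obtain v where v: "\<bar>v - l0\<bar> = \<delta>/2" and \<tau>: "\<exists>\<tau>. t1 \<le> \<tau> \<and> \<tau> \<le> t \<and> y k \<tau> = v"
    proof (cases "l0 < l")
      case True
      have "\<exists>\<tau>. t1 \<le> \<tau> \<and> \<tau> \<le> t \<and> y k \<tau> = l0 + \<delta>/2"
        by (rule IVT'[OF _ _ t(1) cont]) (use l l0 dl True e \<delta> in auto)
      then show ?thesis using that[of "l0 + \<delta>/2"] \<delta> by auto
    next
      case False
      then have "l < l0" using \<open>l \<noteq> l0\<close> by simp
      have "\<exists>\<tau>. t1 \<le> \<tau> \<and> \<tau> \<le> t \<and> y k \<tau> = l0 - \<delta>/2"
        by (rule IVT2'[OF _ _ t(1) cont]) (use l l0 dl \<open>l < l0\<close> e \<delta> in auto)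
      then show ?thesis using that[of "l0 - \<delta>/2"] \<delta> by auto
    qed
    then obtain \<tau> where \<tau>': "t1 \<le> \<tau>" "\<tau> \<le> t" "y k \<tau> = v" by blast
    obtain l' where l': "l' \<in> Lam" "\<bar>y k \<tau> - l'\<bar> < e" using H[of \<tau>] \<tau>' t k by auto
    have "\<bar>v - l'\<bar> \<ge> \<delta>/2" by (rule far[OF v l'(1)])
    then show False using l' \<tau>' e \<delta> by linarith
  qed
  have "eventually (\<lambda>t. \<bar>y k t - l0\<bar> < e) (at_left T0)"
    by (rule eventually_at_leftI[of t1]) (use claim t1 in auto)
  then show ?thesis using l0 by blast
qed

lemma y_conv:
  assumes k: "k \<in> C"
  shows "\<exists>l. (y k \<longlongrightarrow> l) (at_left T0)"
proof -
  obtain \<delta> where \<delta>: "\<delta> > 0" and sep: "\<forall>p\<in>Lam. \<forall>q\<in>Lam. p \<noteq> q \<longrightarrow> \<delta> \<le> \<bar>p - q\<bar>"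
    using delta_exists by blast
  obtain l0 where l0: "l0 \<in> Lam" "eventually (\<lambda>t. \<bar>y k t - l0\<bar> < \<delta>/3) (at_left T0)"
    using stay[OF k \<delta> sep, of "\<delta>/3"] \<delta> by auto
  have "(y k \<longlongrightarrow> l0) (at_left T0)"
    unfolding tendsto_iff dist_real_def
  proof (intro allI impI)
    fix e :: real assume e: "e > 0"
    define e' where "e' = min e (\<delta>/3)"
    have e': "0 < e'" "e' \<le> \<delta>/3" "e' \<le> e" unfolding e'_def using e \<delta> by auto
    obtain l where l: "l \<in> Lam" "eventually (\<lambda>t. \<bar>y k t - l\<bar> < e') (at_left T0)"
      using stay[OF k \<delta> sep e'(1,2)] by blast
    have "eventually (\<lambda>t. \<bar>y k t - l0\<bar> < \<delta>/3 \<and> \<bar>y k t - l\<bar> < e') (at_left T0)"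
      using l0(2) l(2) by (rule eventually_conj)
    then obtain t where "\<bar>y k t - l0\<bar> < \<delta>/3" "\<bar>y k t - l\<bar> < e'"
      using eventually_happens'[of "at_left T0"] by force
    then have "\<bar>l - l0\<bar> < \<delta>" using e' by linarith
    then have "l = l0" using sep l l0 by force
    then show "eventually (\<lambda>t. \<bar>y k t - l0\<bar> < e) (at_left T0)"
      using l(2) e' by (auto elim: eventually_mono)
  qed
  then show ?thesis by blast
qed

end


lemma nn_bounded:
  fixes f :: "real \<Rightarrow> real"
  assumes tT: "t1 < T0" and cont: "continuous_on {t1..<T0} f"
    and nn: "\<And>s. 0 \<le> f s"
    and bd: "\<And>t. t1 \<le> t \<Longrightarrow> t < T0 \<Longrightarrow> integral {t1..t} f \<le> K"
  shows "(\<integral>\<^sup>+ s\<in>{t1..T0}. ennreal (f s) \<partial>lborel) \<le> ennreal K"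
proof -
  define \<tau> where "\<tau> n = T0 - (T0 - t1) / real (Suc n)" for n
  have \<tau>1: "t1 \<le> \<tau> n" for n
  proof -
    have "(T0 - t1) / real (Suc n) \<le> T0 - t1" using tT by (simp add: divide_le_eq)
    then show ?thesis unfolding \<tau>_def by simp
  qed
  have \<tau>2: "\<tau> n < T0" for n unfolding \<tau>_def using tT by simp
  have \<tau>mono: "\<tau> n \<le> \<tau> m" if "n \<le> m" for n m
  proof -
    have "(T0 - t1) / real (Suc m) \<le> (T0 - t1) / real (Suc n)"
      using tT that by (intro divide_left_mono) auto
    then show ?thesis unfolding \<tau>_def by simp
  qed
  have \<tau>lim: "\<exists>n. s \<le> \<tau> n" if "s < T0" for s
  proof -
    obtain n where n: "(T0 - t1) / (T0 - s) < real (Suc n)"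
      using reals_Archimedean2 by (metis less_trans of_nat_Suc lessI add.commute less_add_one)
    have "(T0 - t1) / real (Suc n) < T0 - s"
      using n that by (simp add: divide_less_eq mult.commute)
    then show ?thesis unfolding \<tau>_def by (intro exI[of _ n]) simp
  qed
  define g where "g n s = ennreal (f s) * indicator {t1..\<tau> n} s" for n s
  have contn: "continuous_on {t1..\<tau> n} f" for n
    by (rule continuous_on_subset[OF cont]) (use \<tau>2[of n] in auto)
  have int_n: "integral\<^sup>N lborel (g n) = ennreal (integral {t1..\<tau> n} f)" for n
    unfolding g_def
    by (rule nn_integral_has_integral_lebesgue') (use nn integrable_continuous_interval[OF contn] in auto)
  have inc: "incseq g"
    unfolding incseq_def le_fun_def g_def
    using \<tau>mono by (auto simp: indicator_def intro: order.trans)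
  have meas: "g n \<in> borel_measurable lborel" for n
  proof -
    have eq: "g n = (\<lambda>s. ennreal (indicator {t1..\<tau> n} s *\<^sub>R f s))"
      unfolding g_def by (auto simp: indicator_def fun_eq_iff)
    have "(\<lambda>s. indicator {t1..\<tau> n} s *\<^sub>R f s) \<in> borel_measurable borel"
      by (rule borel_measurable_continuous_on_indicator) (use contn in auto)
    then show ?thesis unfolding eq by simp
  qed
  have sup: "(SUP n. g n s) = ennreal (f s) * indicator {t1..<T0} s" for s
  proof (cases "s \<in> {t1..<T0}")
    case True
    then obtain n where n: "s \<le> \<tau> n" using \<tau>lim by auto
    have "g n s = ennreal (f s)" unfolding g_def using True n by simp
    moreover have "g m s \<le> ennreal (f s)" for m unfolding g_def by (simp add: indicator_def)
    ultimately have "(SUP n. g n s) = ennreal (f s)"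
      by (intro antisym SUP_least) (auto intro: SUP_upper2[of n])
    then show ?thesis using True by simp
  next
    case False
    then have "g n s = 0" for n unfolding g_def using \<tau>2[of n] by (auto simp: indicator_def)
    then show ?thesis using False by simp
  qed
  have "(\<integral>\<^sup>+ s. ennreal (f s) * indicator {t1..<T0} s \<partial>lborel) = (SUP n. integral\<^sup>N lborel (g n))"
    unfolding sup[symmetric] by (rule nn_integral_monotone_convergence_SUP[OF inc meas])
  also have "\<dots> \<le> ennreal K"
    by (rule SUP_least) (use int_n bd \<tau>1 \<tau>2 in \<open>auto intro: ennreal_leI\<close>)
  finally have X: "(\<integral>\<^sup>+ s. ennreal (f s) * indicator {t1..<T0} s \<partial>lborel) \<le> ennreal K" .
  have "(\<integral>\<^sup>+ s\<in>{t1..T0}. ennreal (f s) \<partial>lborel) = (\<integral>\<^sup>+ s. ennreal (f s) * indicator {t1..<T0} s \<partial>lborel)"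
    by (rule nn_integral_cong_AE) (use AE_lborel_singleton[of T0] in \<open>auto elim!: eventually_mono simp: indicator_def\<close>)
  with X show ?thesis by simp
qed

context cons begin

lemma cut_le:
  assumes i: "i \<in> C" and j: "j \<in> C"
    and lim: "\<And>k. k \<in> C \<Longrightarrow> (y k \<longlongrightarrow> l k) (at_left T0)"
    and cont: "continuous_on {t0..<T0} (a i j)"
    and \<kappa>: "\<kappa> > 0"
    and inf: "\<And>t1. t0 \<le> t1 \<Longrightarrow> t1 < T0 \<Longrightarrow> (\<integral>\<^sup>+ s\<in>{t1..T0}. ennreal (\<kappa> * a i j s) \<partial>lborel) = \<infinity>"
  shows "l j \<le> l i"
proof (rule ccontr)
  assume "\<not> ?thesis"
  then have lij: "l i < l j" by simp
  define U where "U = {k\<in>C. l j \<le> l k}"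
  define P where "P = U \<times> (C - U)"
  have UC: "U \<subseteq> C" unfolding U_def by auto
  have fP: "finite P" unfolding P_def U_def using finC by auto
  have jiP: "(j, i) \<in> P" unfolding P_def U_def using i j lij by auto
  define g where "g = Min ((\<lambda>(k,m). l k - l m) ` P)"
  have Ppos: "\<And>p. p \<in> P \<Longrightarrow> 0 < (\<lambda>(k,m). l k - l m) p" unfolding P_def U_def by auto
  have gpos: "g > 0" unfolding g_def using fP jiP Ppos by (subst Min_gr_iff) auto
  have gle: "g \<le> l k - l m" if "(k,m) \<in> P" for k m
    unfolding g_def using fP that by (intro Min_le) force+
  have "\<forall>p\<in>P. eventually (\<lambda>t. g/2 < y (fst p) t - y (snd p) t) (at_left T0)"
  proof
    fix p assume p: "p \<in> P"
    obtain k m where km: "p = (k, m)" by force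
    have kmC: "k \<in> C" "m \<in> C" using p km unfolding P_def U_def by auto
    have "((\<lambda>t. y k t - y m t) \<longlongrightarrow> l k - l m) (at_left T0)"
      by (intro tendsto_diff lim kmC)
    moreover have "g/2 < l k - l m" using gle[of k m] p km gpos by simp
    ultimately have "eventually (\<lambda>t. g/2 < y k t - y m t) (at_left T0)"
      by (rule order_tendstoD(1))
    then show "eventually (\<lambda>t. g/2 < y (fst p) t - y (snd p) t) (at_left T0)"
      using km by simp
  qed
  from eventually_ball_finite[OF fP this]
  obtain t1 where t1: "t0 \<le> t1" "t1 < T0"
    and H: "\<And>t. t1 \<le> t \<Longrightarrow> t < T0 \<Longrightarrow> \<forall>p\<in>P. g/2 < y (fst p) t - y (snd p) t"
    by (rule ev_left_E) blast
  define D where "D u = (\<Sum>k\<in>U. \<Sum>m\<in>C-U. a k m u * (y m u - y k u))" for u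
  have Dle: "D u \<le> - (g/2) * a i j u" if u: "t1 \<le> u" "u < T0" for u
  proof -
    define h where "h k m = a k m u * (y m u - y k u)" for k m
    have hP: "h k m \<le> 0" if "(k,m) \<in> P" for k m
    proof -
      have "g/2 < y k u - y m u" using H[OF u] that by force
      then have "y m u - y k u \<le> 0" using gpos by linarith
      then show ?thesis unfolding h_def using a_nn by (simp add: mult_nonneg_nonpos)
    qed
    have hji: "h j i \<le> - (g/2) * a i j u"
    proof -
      have "g/2 < y j u - y i u" using H[OF u] jiP by force
      then have "y i u - y j u \<le> - (g/2)" by linarith
      then have "a j i u * (y i u - y j u) \<le> a j i u * (- (g/2))"
        using a_nn by (intro mult_left_mono) auto
      then show ?thesis unfolding h_def using a_sym[of j i u] by (simp add: mult.commute)
    qed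
    have fU: "finite U" "finite (C - U)" using UC finC finite_subset by auto
    have jU: "j \<in> U" and iCU: "i \<in> C - U" using jiP unfolding P_def by auto
    have inner: "(\<Sum>m\<in>C-U. h k m) \<le> 0" if "k \<in> U" for k
      using hP that unfolding P_def by (intro sum_nonpos) auto
    have "D u = (\<Sum>k\<in>U. \<Sum>m\<in>C-U. h k m)" unfolding D_def h_def by simp
    also have "\<dots> = (\<Sum>m\<in>C-U. h j m) + (\<Sum>k\<in>U-{j}. \<Sum>m\<in>C-U. h k m)"
      using fU jU by (simp add: sum.remove)
    also have "\<dots> \<le> (\<Sum>m\<in>C-U. h j m)"
    proof -
      have "(\<Sum>k\<in>U-{j}. \<Sum>m\<in>C-U. h k m) \<le> 0" by (rule sum_nonpos) (use inner in auto)
      then show ?thesis by simp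
    qed
    also have "\<dots> = h j i + (\<Sum>m\<in>C-U-{i}. h j m)"
      using fU iCU by (simp add: sum.remove)
    also have "\<dots> \<le> h j i"
    proof -
      have "(\<Sum>m\<in>C-U-{i}. h j m) \<le> 0" by (rule sum_nonpos) (use hP jU in \<open>auto simp: P_def\<close>)
      then show ?thesis by simp
    qed
    finally show ?thesis using hji by simp
  qed
  obtain \<mu>0 where mu0: "\<And>k t. k \<in> C \<Longrightarrow> t \<in> {t0..<T0} \<Longrightarrow> \<mu>0 \<le> y k t"
    using lower by blast
  define K where "K = (ysum U t1 - real (card U) * \<mu>0) * 2 / g"
  have bd: "integral {t1..t} (a i j) \<le> K" if t: "t1 \<le> t" "t < T0" for t
  proof -
    define b' where "b' = (t + T0) / 2"
    have b': "t < b'" "b' < T0" unfolding b'_def using t by auto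
    define f where "f u = ysum U u + (g/2) * integral {t1..u} (a i j)" for u
    have contb: "continuous_on {t1..b'} (a i j)"
      by (rule continuous_on_subset[OF cont]) (use t1 b' in auto)
    have "f t \<le> f t1"
    proof (rule antimono_by_deriv[where f = f and f' = "\<lambda>u. D u + (g/2) * a i j u" and a = t1 and b = b'])
      fix u assume u: "u \<in> {t1..<b'}"
      have u0: "u \<in> {t0..<T0}" using u t1 b' by auto
      have d1: "(ysum U has_real_derivative D u) (at u within {t1..<b'})"
        unfolding D_def
        by (rule DERIV_subset[OF ysum_deriv[OF UC u0]]) (use t1 b' in auto)
      have d2: "((\<lambda>x. integral {t1..x} (a i j)) has_real_derivative a i j u) (at u within {t1..<b'})"
        by (rule DERIV_subset[OF integral_has_real_derivative[OF contb]]) (use u in auto)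
      show "(f has_real_derivative D u + (g/2) * a i j u) (at u within {t1..<b'})"
        unfolding f_def[abs_def] by (intro DERIV_add d1 DERIV_cmult d2)
    next
      fix u assume u: "u \<in> {t1..<b'}"
      show "D u + (g/2) * a i j u \<le> 0" using Dle[of u] u b' by auto
    qed (use t b' in auto)
    moreover have "f t1 = ysum U t1" unfolding f_def by simp
    moreover have "real (card U) * \<mu>0 \<le> ysum U t"
    proof -
      have "real (card U) * \<mu>0 = (\<Sum>k\<in>U. \<mu>0)" by simp
      also have "\<dots> \<le> ysum U t" unfolding ysum_def using mu0 UC t t1 by (intro sum_mono) auto
      finally show ?thesis .
    qed
    ultimately have "(g/2) * integral {t1..t} (a i j) \<le> ysum U t1 - real (card U) * \<mu>0"
      unfolding f_def by linarith
    then show ?thesis unfolding K_def using gpos by (simp add: field_simps)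
  qed
  have bd': "integral {t1..t} (\<lambda>s. \<kappa> * a i j s) \<le> \<kappa> * K" if t: "t1 \<le> t" "t < T0" for t
    using bd[OF t] \<kappa> by (simp add: integral_mult_right)
  have "(\<integral>\<^sup>+ s\<in>{t1..T0}. ennreal (\<kappa> * a i j s) \<partial>lborel) \<le> ennreal (\<kappa> * K)"
  proof (rule nn_bounded[OF t1(2) _ _ bd'])
    show "continuous_on {t1..<T0} (\<lambda>s. \<kappa> * a i j s)"
      by (intro continuous_on_mult_left continuous_on_subset[OF cont]) (use t1 in auto)
    show "0 \<le> \<kappa> * a i j s" for s using \<kappa> a_nn by simp
  qed
  then show False using inf[OF t1] by (simp add: top_unique)
qed

lemma same_limit:
  assumes i: "i \<in> C" and j: "j \<in> C"
    and lim: "\<And>k. k \<in> C \<Longrightarrow> (y k \<longlongrightarrow> l k) (at_left T0)"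
    and cont: "continuous_on {t0..<T0} (a i j)"
    and \<kappa>: "\<kappa> > 0"
    and inf: "\<And>t1. t0 \<le> t1 \<Longrightarrow> t1 < T0 \<Longrightarrow> (\<integral>\<^sup>+ s\<in>{t1..T0}. ennreal (\<kappa> * a i j s) \<partial>lborel) = \<infinity>"
  shows "l i = l j"
proof -
  have a_eq: "a j i = a i j" using a_sym by (simp add: fun_eq_iff)
  have "l j \<le> l i" by (rule cut_le[OF i j lim cont \<kappa> inf])
  moreover have "l i \<le> l j" by (rule cut_le[OF j i lim _ \<kappa>]) (use cont inf a_eq in auto)
  ultimately show ?thesis by simp
qed

end


lemma inner_self_deriv:
  fixes f :: "real \<Rightarrow> 'a::real_inner"
  assumes "(f has_vector_derivative f') (at t within S)"
  shows "((\<lambda>s. f s \<bullet> f s) has_real_derivative 2 * (f t \<bullet> f')) (at t within S)"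
proof -
  have a: "(f has_derivative (\<lambda>h. h *\<^sub>R f')) (at t within S)"
    using assms by (simp add: has_vector_derivative_def)
  have "((\<lambda>s. f s \<bullet> f s) has_derivative (\<lambda>h. f t \<bullet> (h *\<^sub>R f') + (h *\<^sub>R f') \<bullet> f t)) (at t within S)"
    by (rule has_derivative_inner[OF a a])
  moreover have "(\<lambda>h. f t \<bullet> (h *\<^sub>R f') + (h *\<^sub>R f') \<bullet> f t) = (\<lambda>h. (2 * (f t \<bullet> f')) * h)"
    by (auto simp: fun_eq_iff inner_commute algebra_simps)
  ultimately show ?thesis by (simp add: has_field_derivative_def)
qed

lemma antimono_cl:
  fixes f f' :: "real \<Rightarrow> real"
  assumes d: "\<And>u. u \<in> {a..b} \<Longrightarrow> (f has_real_derivative f' u) (at u within {a..b})"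
    and nz: "\<And>u. u \<in> {a..b} \<Longrightarrow> f' u \<le> 0"
    and st: "a \<le> s" "s \<le> t" "t \<le> b"
  shows "f t \<le> f s"
proof (cases "s = t")
  case True then show ?thesis by simp
next
  case False
  then have "s < t" using st by simp
  have "\<And>x. s \<le> x \<Longrightarrow> x \<le> t \<Longrightarrow> (f has_derivative (\<lambda>h. f' x * h)) (at x within {s..t})"
  proof -
    fix x assume "s \<le> x" "x \<le> t"
    then have x: "x \<in> {a..b}" using st by auto
    from d[OF x] have "(f has_real_derivative f' x) (at x within {s..t})"
      by (rule DERIV_subset) (use st in auto)
    then show "(f has_derivative (\<lambda>h. f' x * h)) (at x within {s..t})"
      by (simp add: has_field_derivative_def)
  qed
  from mvt_simple[OF \<open>s < t\<close> this] obtain x where x: "x \<in> {s<..<t}" "f t - f s = f' x * (t - s)"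
    by auto
  have "f' x \<le> 0" using nz x st by auto
  with x \<open>s<t\<close> show ?thesis by (smt (verit) mult_nonpos_nonneg)
qed

lemma gronwall0:
  fixes E E' :: "real \<Rightarrow> real"
  assumes d: "\<And>u. u \<in> {a..b} \<Longrightarrow> (E has_real_derivative E' u) (at u within {a..b})"
    and bd: "\<And>u. u \<in> {a..b} \<Longrightarrow> E' u \<le> K * E u"
    and nn: "\<And>u. u \<in> {a..b} \<Longrightarrow> 0 \<le> E u"
    and E0: "E a = 0" and t: "t \<in> {a..b}"
  shows "E t = 0"
proof -
  define G where "G u = E u * exp (- K * u)" for u
  have "G t \<le> G a"
  proof (rule antimono_cl[where f = G and f' = "\<lambda>u. (E' u - K * E u) * exp (- K * u)"])
    fix u assume u: "u \<in> {a..b}"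
    have "((\<lambda>u. exp (- K * u)) has_real_derivative exp (- K * u) * (- K)) (at u within {a..b})"
      by (auto intro!: derivative_eq_intros)
    from DERIV_mult[OF d[OF u] this]
    show "(G has_real_derivative (E' u - K * E u) * exp (- K * u)) (at u within {a..b})"
      unfolding G_def[abs_def] by (simp add: algebra_simps)
  next
    fix u assume u: "u \<in> {a..b}"
    show "(E' u - K * E u) * exp (- K * u) \<le> 0" using bd[OF u] by (simp add: mult_nonpos_nonneg)
  qed (use t in auto)
  then have "E t * exp (- K * t) \<le> 0" unfolding G_def using E0 by simp
  then have "E t \<le> 0" by (simp add: mult_le_0_iff)
  then show ?thesis using nn[OF t] by simp
qed


lemma bound_fin:
  fixes Z :: "real \<Rightarrow> nat \<Rightarrow> 'a::real_normed_vector"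
  assumes "\<And>k. k < N \<Longrightarrow> continuous_on {0..T} (\<lambda>s. Z s k)"
  shows "\<exists>B. \<forall>k<N. \<forall>t\<in>{0..T}. norm (Z t k) \<le> B"
proof -
  have "bounded (\<Union>k\<in>{..<N}. (\<lambda>s. Z s k) ` {0..T})"
    by (intro bounded_UN) (auto intro!: compact_imp_bounded compact_continuous_image assms)
  then obtain b where "\<forall>x\<in>(\<Union>k\<in>{..<N}. (\<lambda>s. Z s k) ` {0..T}). norm x \<le> b"
    unfolding bounded_pos by blast
  then show ?thesis by auto
qed

lemma identical:
  fixes X V :: "real \<Rightarrow> nat \<Rightarrow> real^'d::finite" and \<psi> :: "real \<Rightarrow> real"
  assumes ij: "i < N" "j < N"
   and init: "X 0 i = X 0 j" "V 0 i = V 0 j"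
   and dX: "\<And>k t. k < N \<Longrightarrow> t \<in> {0..T} \<Longrightarrow> ((\<lambda>s. X s k) has_vector_derivative V t k) (at t within {0..T})"
   and dV: "\<And>k t. k < N \<Longrightarrow> t \<in> {0..T} \<Longrightarrow> ((\<lambda>s. V s k) has_vector_derivative
        (1 / real N) *\<^sub>R (\<Sum>l<N. \<psi> (norm (X t k - X t l)) *\<^sub>R (V t l - V t k))) (at t within {0..T})"
   and lip: "\<And>R. \<exists>Lp. \<forall>p q. 0 \<le> p \<longrightarrow> p \<le> R \<longrightarrow> 0 \<le> q \<longrightarrow> q \<le> R \<longrightarrow> \<bar>\<psi> p - \<psi> q\<bar> \<le> Lp * \<bar>p - q\<bar>"
   and t: "t \<in> {0..T}"
  shows "X t i = X t j \<and> V t i = V t j"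
proof -
  have Npos: "0 < real N" using ij by simp
  have contX: "continuous_on {0..T} (\<lambda>s. X s k)" if "k < N" for k
    by (rule continuous_on_vector_derivative) (rule dX[OF that])
  have contV: "continuous_on {0..T} (\<lambda>s. V s k)" if "k < N" for k
    by (rule continuous_on_vector_derivative) (rule dV[OF that])
  obtain BX where BX: "\<And>k t. k < N \<Longrightarrow> t \<in> {0..T} \<Longrightarrow> norm (X t k) \<le> BX"
    using bound_fin[of N T X, OF contX] by blast
  obtain BV where BV: "\<And>k t. k < N \<Longrightarrow> t \<in> {0..T} \<Longrightarrow> norm (V t k) \<le> BV"
    using bound_fin[of N T V, OF contV] by blast
  have BX0: "0 \<le> BX" using BX[OF ij(1) t] norm_ge_zero order.trans by blast
  have BV0: "0 \<le> BV" using BV[OF ij(1) t] norm_ge_zero order.trans by blast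
  define R where "R = 2 * BX"
  obtain Lp0 where Lp0: "\<forall>p q. 0 \<le> p \<longrightarrow> p \<le> R \<longrightarrow> 0 \<le> q \<longrightarrow> q \<le> R \<longrightarrow> \<bar>\<psi> p - \<psi> q\<bar> \<le> Lp0 * \<bar>p - q\<bar>"
    using lip by blast
  define Lp where "Lp = max Lp0 0"
  have Lp0': "0 \<le> Lp" unfolding Lp_def by simp
  have Lp: "\<bar>\<psi> p - \<psi> q\<bar> \<le> Lp * \<bar>p - q\<bar>" if "0 \<le> p" "p \<le> R" "0 \<le> q" "q \<le> R" for p q
  proof -
    have "\<bar>\<psi> p - \<psi> q\<bar> \<le> Lp0 * \<bar>p - q\<bar>" using Lp0 that by blast
    also have "\<dots> \<le> Lp * \<bar>p - q\<bar>" unfolding Lp_def by (intro mult_right_mono) auto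
    finally show ?thesis .
  qed
  define Pb where "Pb = \<bar>\<psi> 0\<bar> + Lp * R"
  have Pb: "\<bar>\<psi> p\<bar> \<le> Pb" if "0 \<le> p" "p \<le> R" for p
  proof -
    have "\<bar>\<psi> p - \<psi> 0\<bar> \<le> Lp * \<bar>p - 0\<bar>" using Lp[of p 0] that BX0 R_def by simp
    also have "\<dots> \<le> Lp * R" using that Lp0' by (intro mult_left_mono) auto
    finally show ?thesis unfolding Pb_def by linarith
  qed
  have Pb0: "0 \<le> Pb" using Pb[of 0] BX0 R_def by simp
  have dist_R: "norm (X u k - X u l) \<le> R" if "k < N" "l < N" "u \<in> {0..T}" for k l u
    using norm_triangle_ineq4[of "X u k" "X u l"] BX[OF that(1,3)] BX[OF that(2,3)] unfolding R_def by linarith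
  define e where "e u = X u i - X u j" for u
  define d where "d u = V u i - V u j" for u
  define D where "D u = (1 / real N) *\<^sub>R (\<Sum>l<N. \<psi> (norm (X u i - X u l)) *\<^sub>R (V u l - V u i))
      - (1 / real N) *\<^sub>R (\<Sum>l<N. \<psi> (norm (X u j - X u l)) *\<^sub>R (V u l - V u j))" for u
  define c1 where "c1 = Lp * (2 * BV)"
  have c10: "0 \<le> c1" unfolding c1_def using Lp0' BV0 by simp
  have de: "(e has_vector_derivative d u) (at u within {0..T})" if "u \<in> {0..T}" for u
    unfolding e_def[abs_def] d_def by (intro has_vector_derivative_diff dX ij that)
  have dd: "(d has_vector_derivative D u) (at u within {0..T})" if "u \<in> {0..T}" for u
    unfolding d_def[abs_def] D_def by (intro has_vector_derivative_diff dV ij that)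
  have Dbound: "norm (D u) \<le> c1 * norm (e u) + Pb * norm (d u)" if u: "u \<in> {0..T}" for u
  proof -
    define tm where "tm l = (\<psi> (norm (X u i - X u l)) - \<psi> (norm (X u j - X u l))) *\<^sub>R (V u l - V u i)
        - \<psi> (norm (X u j - X u l)) *\<^sub>R d u" for l
    have Deq: "D u = (1 / real N) *\<^sub>R (\<Sum>l<N. tm l)"
    proof -
      have "\<And>l. \<psi> (norm (X u i - X u l)) *\<^sub>R (V u l - V u i) - \<psi> (norm (X u j - X u l)) *\<^sub>R (V u l - V u j) = tm l"
        unfolding tm_def d_def by (simp add: algebra_simps)
      then show ?thesis unfolding D_def by (simp add: scaleR_diff_right[symmetric] sum_subtractf[symmetric])
    qed
    have tmb: "norm (tm l) \<le> c1 * norm (e u) + Pb * norm (d u)" if l: "l < N" for l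
    proof -
      have p1: "0 \<le> norm (X u i - X u l)" "norm (X u i - X u l) \<le> R" using dist_R[OF ij(1) l u] by auto
      have p2: "0 \<le> norm (X u j - X u l)" "norm (X u j - X u l) \<le> R" using dist_R[OF ij(2) l u] by auto
      have "\<bar>norm (X u i - X u l) - norm (X u j - X u l)\<bar> \<le> norm ((X u i - X u l) - (X u j - X u l))"
        by (rule norm_triangle_ineq3)
      also have "\<dots> = norm (e u)" unfolding e_def by (simp add: algebra_simps)
      finally have h1: "\<bar>norm (X u i - X u l) - norm (X u j - X u l)\<bar> \<le> norm (e u)" .
      have h2: "\<bar>\<psi> (norm (X u i - X u l)) - \<psi> (norm (X u j - X u l))\<bar> \<le> Lp * norm (e u)"
        using Lp[OF p1 p2] h1 Lp0' by (meson mult_left_mono order.trans)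
      have h3: "norm (V u l - V u i) \<le> 2 * BV"
        using norm_triangle_ineq4[of "V u l" "V u i"] BV[OF l u] BV[OF ij(1) u] by linarith
      have "norm (tm l) \<le> \<bar>\<psi> (norm (X u i - X u l)) - \<psi> (norm (X u j - X u l))\<bar> * norm (V u l - V u i)
          + \<bar>\<psi> (norm (X u j - X u l))\<bar> * norm (d u)"
        unfolding tm_def by (rule order.trans[OF norm_triangle_ineq4]) simp
      also have "\<dots> \<le> (Lp * norm (e u)) * (2 * BV) + Pb * norm (d u)"
        by (intro add_mono mult_mono h2 h3 Pb p2) (use Lp0' BV0 Pb0 in auto)
      finally show ?thesis unfolding c1_def by (simp add: algebra_simps)
    qed
    have "norm (D u) = (1 / real N) * norm (\<Sum>l<N. tm l)" unfolding Deq using Npos by simp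
    also have "\<dots> \<le> (1 / real N) * (\<Sum>l<N. norm (tm l))"
      using Npos by (intro mult_left_mono norm_sum) auto
    also have "\<dots> \<le> (1 / real N) * (\<Sum>l<N. c1 * norm (e u) + Pb * norm (d u))"
      using Npos tmb by (intro mult_left_mono sum_mono) auto
    also have "\<dots> = c1 * norm (e u) + Pb * norm (d u)" using Npos by simp
    finally show ?thesis .
  qed
  define E where "E u = e u \<bullet> e u + d u \<bullet> d u" for u
  define K where "K = 1 + c1 + 2 * Pb"
  have E0: "E 0 = 0" unfolding E_def e_def d_def using init by simp
  have Et: "E t = 0"
  proof (rule gronwall0[where E = E and E' = "\<lambda>u. 2 * (e u \<bullet> d u) + 2 * (d u \<bullet> D u)" and a = 0 and b = T and K = K])
    fix u assume u: "u \<in> {0..T}"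
    show "(E has_real_derivative 2 * (e u \<bullet> d u) + 2 * (d u \<bullet> D u)) (at u within {0..T})"
      unfolding E_def[abs_def] by (intro DERIV_add inner_self_deriv de dd u)
  next
    fix u assume u: "u \<in> {0..T}"
    define ne where "ne = norm (e u)"
    define nd where "nd = norm (d u)"
    have ne0: "0 \<le> ne" "0 \<le> nd" unfolding ne_def nd_def by auto
    have i1: "e u \<bullet> d u \<le> ne * nd" unfolding ne_def nd_def using Cauchy_Schwarz_ineq2[of "e u" "d u"] by linarith
    have i2: "d u \<bullet> D u \<le> nd * (c1 * ne + Pb * nd)"
    proof -
      have "d u \<bullet> D u \<le> nd * norm (D u)" unfolding nd_def using Cauchy_Schwarz_ineq2[of "d u" "D u"] by linarith
      also have "\<dots> \<le> nd * (c1 * ne + Pb * nd)" unfolding ne_def nd_def using Dbound[OF u] by (intro mult_left_mono) auto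
      finally show ?thesis .
    qed
    have i3: "2 * ne * nd \<le> ne * ne + nd * nd"
      using sum_squares_ge_zero[of ne nd] by (smt (verit) mult_diff_mult power2_diff power2_eq_square zero_le_power2)
    have Eu: "E u = ne * ne + nd * nd" unfolding E_def ne_def nd_def by (simp add: dot_square_norm power2_eq_square)
    have "2 * (e u \<bullet> d u) + 2 * (d u \<bullet> D u) \<le> 2 * (ne * nd) + 2 * (nd * (c1 * ne + Pb * nd))"
      using i1 i2 by linarith
    also have "\<dots> = (1 + c1) * (2 * ne * nd) + 2 * Pb * (nd * nd)" by (simp add: algebra_simps)
    also have "\<dots> \<le> (1 + c1) * (ne * ne + nd * nd) + 2 * Pb * (ne * ne + nd * nd)"
      using i3 c10 Pb0 ne0 by (intro add_mono mult_left_mono) auto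
    also have "\<dots> = K * E u" unfolding K_def Eu by (simp add: algebra_simps)
    finally show "2 * (e u \<bullet> d u) + 2 * (d u \<bullet> D u) \<le> K * E u" .
  next
    fix u assume u: "u \<in> {0..T}"
    show "0 \<le> E u" unfolding E_def by simp
  qed (use E0 t in auto)
  then have "e t \<bullet> e t = 0" "d t \<bullet> d t = 0"
    unfolding E_def using inner_ge_zero[of "e t"] inner_ge_zero[of "d t"] by linarith+
  then show ?thesis unfolding e_def d_def by simp
qed


lemma psin_lip:
  assumes \<alpha>: "0 < \<alpha>" and reg: "psi_reg \<alpha> \<psi>n" and n: "n \<ge> 2"
  shows "\<exists>Lp. \<forall>p q. 0 \<le> p \<longrightarrow> p \<le> R \<longrightarrow> 0 \<le> q \<longrightarrow> q \<le> R \<longrightarrow> \<bar>\<psi>n n p - \<psi>n n q\<bar> \<le> Lp * \<bar>p - q\<bar>"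
proof -
  define f where "f = \<psi>n n"
  define h where "h = real n powr (- 1 / \<alpha>)"
  have hpos: "h > 0" unfolding h_def using n by simp
  have const: "\<And>s. 0 \<le> s \<Longrightarrow> s \<le> h \<Longrightarrow> f s = real n"
    using reg n unfolding psi_reg_def f_def h_def by blast
  have sm: "smooth_on {0<..} f" using reg n unfolding psi_reg_def f_def by blast
  have fd: "f differentiable (at s)" if "s > 0" for s
    using sm that unfolding smooth_on_def by (metis funpow_0 greaterThan_iff)
  have dd: "(deriv f) differentiable (at s)" if "s > 0" for s
  proof -
    have "((deriv ^^ 1) f) differentiable (at s)" using sm that unfolding smooth_on_def by blast
    then show ?thesis by simp
  qed
  define h2 where "h2 = h / 2"
  have h2: "0 < h2" "h2 \<le> h" unfolding h2_def using hpos by auto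
  define R' where "R' = max R h2"
  have "continuous_on {h2..R'} (deriv f)"
    by (intro continuous_at_imp_continuous_on ballI differentiable_imp_continuous_within dd) (use h2 in auto)
  then have "bounded (deriv f ` {h2..R'})" by (intro compact_imp_bounded compact_continuous_image) auto
  then obtain M where M: "\<And>s. s \<in> {h2..R'} \<Longrightarrow> \<bar>deriv f s\<bar> \<le> M" and M0: "M > 0"
    unfolding bounded_pos by (auto simp: real_norm_def) (meson atLeastAtMost_iff)
  have mvt: "\<bar>f q - f p\<bar> \<le> M * (q - p)" if pq: "h2 \<le> p" "p \<le> q" "q \<le> R'" for p q
  proof (cases "p = q")
    case True then show ?thesis by simp
  next
    case False
    then have "p < q" using pq by simp
    have "\<And>x. p \<le> x \<Longrightarrow> x \<le> q \<Longrightarrow> DERIV f x :> deriv f x"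
      using fd h2 pq by (simp add: DERIV_deriv_iff_real_differentiable)
    from MVT2[OF \<open>p < q\<close> this] obtain z where z: "p < z" "z < q" "f q - f p = (q - p) * deriv f z" by blast
    have "\<bar>deriv f z\<bar> \<le> M" using M z pq by auto
    then show ?thesis using z \<open>p < q\<close> by (simp add: abs_mult mult.commute mult_left_mono)
  qed
  have lipc: "\<bar>f p - f q\<bar> \<le> M * \<bar>p - q\<bar>" if "h2 \<le> p" "p \<le> R'" "h2 \<le> q" "q \<le> R'" for p q
  proof (cases "p \<le> q")
    case True then show ?thesis using mvt[of p q] that by (simp add: abs_minus_commute)
  next
    case False then show ?thesis using mvt[of q p] that by simp
  qed
  have clamp: "f p = f (max p h2)" if "0 \<le> p" for p
  proof (cases "p \<le> h2")
    case True then show ?thesis using const[of p] const[of h2] h2 that by simp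
  next
    case False then show ?thesis by simp
  qed
  have "\<forall>p q. 0 \<le> p \<longrightarrow> p \<le> R \<longrightarrow> 0 \<le> q \<longrightarrow> q \<le> R \<longrightarrow> \<bar>f p - f q\<bar> \<le> M * \<bar>p - q\<bar>"
  proof (intro allI impI)
    fix p q assume pq: "0 \<le> p" "p \<le> R" "0 \<le> q" "q \<le> R"
    have "\<bar>f p - f q\<bar> = \<bar>f (max p h2) - f (max q h2)\<bar>" by (simp only: clamp[OF pq(1)] clamp[OF pq(3)])
    also have "\<dots> \<le> M * \<bar>max p h2 - max q h2\<bar>" by (rule lipc) (use pq in \<open>auto simp: R'_def\<close>)
    also have "\<dots> \<le> M * \<bar>p - q\<bar>" using M0 by (intro mult_left_mono) (auto simp: max_def)
    finally show "\<bar>f p - f q\<bar> \<le> M * \<bar>p - q\<bar>" .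
  qed
  then show ?thesis unfolding f_def by blast
qed


theorem proposition2p6:
  fixes N :: nat and \<alpha> T T0 t0 :: real and \<psi>n :: "nat \<Rightarrow> real \<Rightarrow> real"
    and x0 v0 :: "nat \<Rightarrow> real^'d::finite"
    and xn vn :: "nat \<Rightarrow> real \<Rightarrow> nat \<Rightarrow> real^'d"
    and r :: "nat \<Rightarrow> nat"
    and x v w :: "real \<Rightarrow> nat \<Rightarrow> real^'d"
    and i j :: nat
  assumes N: "N \<ge> 1"
    and \<alpha>: "0 < \<alpha>" "\<alpha> < 1"
    and T: "T > 0"
    and psi_n: "psi_reg \<alpha> \<psi>n"
    and sol_init: "\<And>n k. n \<ge> 2 \<Longrightarrow> k < N \<Longrightarrow> xn n 0 k = x0 k \<and> vn n 0 k = v0 k"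
    and sol_x: "\<And>n k t. n \<ge> 2 \<Longrightarrow> k < N \<Longrightarrow> t \<in> {0..T} \<Longrightarrow>
        ((\<lambda>s. xn n s k) has_vector_derivative vn n t k) (at t within {0..T})"
    and sol_v: "\<And>n k t. n \<ge> 2 \<Longrightarrow> k < N \<Longrightarrow> t \<in> {0..T} \<Longrightarrow>
        ((\<lambda>s. vn n s k) has_vector_derivative
           (1 / real N) *\<^sub>R (\<Sum>l<N. \<psi>n n (norm (xn n t k - xn n t l)) *\<^sub>R (vn n t l - vn n t k)))
        (at t within {0..T})"
    and r: "strict_mono r"
    and unif: "\<And>k. k < N \<Longrightarrow>
        uniform_limit {0..T} (\<lambda>m t. xn (r m) t k) (\<lambda>t. x t k) sequentially"
    and T0_def: "T0 = Inf {t \<in> {0<..T}. \<exists>k<N. \<exists>l\<in>Bset N x0 v0 k.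
                   lim (\<lambda>m. norm (xn (r m) t k - xn (r m) t l)) = 0}"
    and T0_fin: "{t \<in> {0<..T}. \<exists>k<N. \<exists>l\<in>Bset N x0 v0 k.
                   lim (\<lambda>m. norm (xn (r m) t k - xn (r m) t l)) = 0} \<noteq> {}"
    and T0_le: "T0 \<le> T"
    and vdef: "\<And>k t. k < N \<Longrightarrow> t \<in> {0..<T0} \<Longrightarrow>
        ((\<lambda>s. x s k) has_vector_derivative v t k) (at t within {0..<T0})"
    and C1: "\<And>k t. k < N \<Longrightarrow> t \<in> {0..<T0} \<Longrightarrow>
        uniform_limit {0..t} (\<lambda>m s. vn (r m) s k) (\<lambda>s. v s k) sequentially"
    and t0: "0 < t0" "t0 < T0"
    and w_init: "\<And>k. k < N \<Longrightarrow> w t0 k = v t0 k"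
    and w_ode: "\<And>k t. k < N \<Longrightarrow> t \<in> {t0..<T0} \<Longrightarrow>
        ((\<lambda>s. w s k) has_vector_derivative
           (1 / real N) *\<^sub>R (\<Sum>l\<in>cls N x0 v0 \<alpha> x T0 k.
               psi \<alpha> (norm (x t k - x t l)) *\<^sub>R (w t l - w t k)))
        (at t within {t0..<T0})"
    and ij: "i < N" "j < N" "csim N x0 v0 \<alpha> x T0 i j"
  shows "((\<lambda>t. norm (w t i - w t j)) \<longlongrightarrow> 0) (at_left T0)"
proof -
  let ?cs = "csim N x0 v0 \<alpha> x T0"
  let ?ds = "dsim N x0 v0 \<alpha> x T0"
  let ?cls = "cls N x0 v0 \<alpha> x T0"
  define Q where "Q p q \<longleftrightarrow> ((\<lambda>t. w t p - w t q) \<longlongrightarrow> 0) (at_left T0)" for p q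
  have Npos: "0 < real N" using N by simp
  have tT: "t0 < T0" using t0 by simp
  have cs_sym: "?cs p q \<Longrightarrow> ?cs q p" for p q unfolding csim_def by (rule equivclp_sym)
  have cs_trans: "?cs p q \<Longrightarrow> ?cs q s \<Longrightarrow> ?cs p s" for p q s unfolding csim_def by (rule equivclp_trans)
  have cls_eq: "?cls p = ?cls q" if "?cs p q" for p q
  proof -
    have "?cs p k \<longleftrightarrow> ?cs q k" for k using cs_trans[OF cs_sym[OF that], of k] cs_trans[OF that, of k] by blast
    then show ?thesis unfolding cls_def by simp
  qed
  have ds_cs: "?ds p q \<Longrightarrow> ?cs p q" for p q unfolding csim_def by (rule r_into_equivclp)
  have cs_refl: "?cs p p" for p unfolding csim_def by simp
  have cls_sub: "?cls p \<subseteq> {..<N}" for p unfolding cls_def by auto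
  have fin_cls: "finite (?cls p)" for p by (rule finite_subset[OF cls_sub]) simp
  have x_cont: "continuous_on {0..<T0} (\<lambda>s. x s k)" if "k < N" for k
    by (rule continuous_on_vector_derivative) (rule vdef[OF that])
  have r2: "r m \<ge> 2" if "m \<ge> 2" for m using seq_suble[OF r, of m] that by simp
  have x_lim: "(\<lambda>m. xn (r m) t k) \<longlonglongrightarrow> x t k" if "k < N" "t \<in> {0..T}" for k t
    by (rule tendsto_uniform_limitI[OF unif[OF that(1)] that(2)])
  have v_lim: "(\<lambda>m. vn (r m) t k) \<longlonglongrightarrow> v t k" if "k < N" "t \<in> {0..<T0}" for k t
    by (rule tendsto_uniform_limitI[OF C1[OF that]]) (use that in auto)
  have psi_nn: "0 \<le> psi \<alpha> s" for s unfolding psi_def by simp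
  have pos: "x t p \<noteq> x t q" if p: "p < N" and q: "q \<in> Bset N x0 v0 p" and t: "0 < t" "t < T0" for p q t
  proof
    assume eq: "x t p = x t q"
    have qN: "q < N" using q unfolding Bset_def by simp
    have tT': "t \<in> {0..T}" using t T0_le by auto
    have "(\<lambda>m. norm (xn (r m) t p - xn (r m) t q)) \<longlonglongrightarrow> norm (x t p - x t q)"
      by (intro tendsto_norm tendsto_diff x_lim p qN tT')
    then have "lim (\<lambda>m. norm (xn (r m) t p - xn (r m) t q)) = 0" using eq by (simp add: limI)
    then have "t \<in> {t \<in> {0<..T}. \<exists>k<N. \<exists>l\<in>Bset N x0 v0 k. lim (\<lambda>m. norm (xn (r m) t k - xn (r m) t l)) = 0}"
      using p q t tT' by auto
    then have "T0 \<le> t" unfolding T0_def by (rule cInf_lower) (auto intro!: bdd_belowI[of _ 0])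
    then show False using t by simp
  qed
  have dsQ: "Q p q" if ds: "?ds p q" for p q
  proof -
    have pN: "p < N" and qN: "q < N" using ds unfolding dsim_def by auto
    have cspq: "?cs p q" using ds_cs[OF ds] .
    show ?thesis
    proof (cases "q \<in> Bset N x0 v0 p")
      case False
      then have x0eq: "x0 q = x0 p" and v0eq: "v0 q = v0 p" using qN unfolding Bset_def by auto
      have ident: "xn (r m) t p = xn (r m) t q \<and> vn (r m) t p = vn (r m) t q"
        if m: "m \<ge> 2" and t: "t \<in> {0..T}" for m t
      proof (rule identical[where X = "xn (r m)" and V = "vn (r m)" and \<psi> = "\<psi>n (r m)" and N = N
            and i = p and j = q and T = T and t = t])
        show "xn (r m) 0 p = xn (r m) 0 q" using sol_init[OF r2[OF m] pN] sol_init[OF r2[OF m] qN] x0eq by simp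
        show "vn (r m) 0 p = vn (r m) 0 q" using sol_init[OF r2[OF m] pN] sol_init[OF r2[OF m] qN] v0eq by simp
        show "\<And>R. \<exists>Lp. \<forall>pa qa. 0 \<le> pa \<longrightarrow> pa \<le> R \<longrightarrow> 0 \<le> qa \<longrightarrow> qa \<le> R \<longrightarrow> \<bar>\<psi>n (r m) pa - \<psi>n (r m) qa\<bar> \<le> Lp * \<bar>pa - qa\<bar>"
          by (rule psin_lip[OF \<alpha>(1) psi_n r2[OF m]])
      qed (use pN qN t sol_x[OF r2[OF m]] sol_v[OF r2[OF m]] in auto)
      have evs: "eventually (\<lambda>m. m \<ge> 2) sequentially" by (rule eventually_ge_at_top)
      have xeq: "x t p = x t q" if t: "t \<in> {0..T}" for t
      proof -
        have "(\<lambda>m. xn (r m) t p) \<longlonglongrightarrow> x t q"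
          by (rule Lim_transform_eventually[OF x_lim[OF qN t]]) (use ident t in \<open>auto intro: eventually_mono[OF evs]\<close>)
        then show ?thesis using x_lim[OF pN t] LIMSEQ_unique by blast
      qed
      have veq: "v t p = v t q" if t: "t \<in> {0..<T0}" for t
      proof -
        have tT': "t \<in> {0..T}" using t T0_le by auto
        have "(\<lambda>m. vn (r m) t p) \<longlonglongrightarrow> v t q"
          by (rule Lim_transform_eventually[OF v_lim[OF qN t]]) (use ident tT' in \<open>auto intro: eventually_mono[OF evs]\<close>)
        then show ?thesis using v_lim[OF pN t] LIMSEQ_unique by blast
      qed
      define z where "z t = w t p - w t q" for t
      define A where "A t = (1 / real N) * (\<Sum>l\<in>?cls p. psi \<alpha> (norm (x t p - x t l)))" for t
      have A0: "0 \<le> A t" for t unfolding A_def using Npos psi_nn by (simp add: sum_nonneg)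
      have clsq: "?cls q = ?cls p" using cls_eq[OF cspq] by simp
      have dz: "(z has_vector_derivative (- A t) *\<^sub>R z t) (at t within {t0..<T0})" if t: "t \<in> {t0..<T0}" for t
      proof -
        have tT': "t \<le> T" using t T0_le by auto
        have xe: "x t q = x t p" using xeq[of t] t t0 tT' by auto
        have "(z has_vector_derivative
            (1 / real N) *\<^sub>R (\<Sum>l\<in>?cls p. psi \<alpha> (norm (x t p - x t l)) *\<^sub>R (w t l - w t p))
          - (1 / real N) *\<^sub>R (\<Sum>l\<in>?cls q. psi \<alpha> (norm (x t q - x t l)) *\<^sub>R (w t l - w t q)))
            (at t within {t0..<T0})"
          unfolding z_def[abs_def] by (intro has_vector_derivative_diff w_ode pN qN t)
        moreover have "(1 / real N) *\<^sub>R (\<Sum>l\<in>?cls p. psi \<alpha> (norm (x t p - x t l)) *\<^sub>R (w t l - w t p))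
          - (1 / real N) *\<^sub>R (\<Sum>l\<in>?cls q. psi \<alpha> (norm (x t q - x t l)) *\<^sub>R (w t l - w t q))
          = (- A t) *\<^sub>R z t"
        proof -
          let ?P = "\<lambda>l. psi \<alpha> (norm (x t p - x t l))"
          have "(1 / real N) *\<^sub>R (\<Sum>l\<in>?cls p. ?P l *\<^sub>R (w t l - w t p))
            - (1 / real N) *\<^sub>R (\<Sum>l\<in>?cls p. ?P l *\<^sub>R (w t l - w t q))
            = (1 / real N) *\<^sub>R (\<Sum>l\<in>?cls p. ?P l *\<^sub>R (w t l - w t p) - ?P l *\<^sub>R (w t l - w t q))"
            by (simp only: scaleR_diff_right sum_subtractf)
          also have "\<dots> = (1 / real N) *\<^sub>R (\<Sum>l\<in>?cls p. ?P l *\<^sub>R (w t q - w t p))"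
            by (simp only: scaleR_diff_right[symmetric]) (simp add: diff_diff_eq2 diff_add_eq)
          also have "\<dots> = (1 / real N) *\<^sub>R ((\<Sum>l\<in>?cls p. ?P l) *\<^sub>R (w t q - w t p))"
            by (simp only: scaleR_sum_left)
          also have "\<dots> = (- A t) *\<^sub>R z t"
            unfolding A_def z_def by (simp add: scaleR_diff_right)
          finally show ?thesis unfolding clsq xe .
        qed
        ultimately show ?thesis by simp
      qed
      have zz: "z t \<bullet> z t \<le> z t0 \<bullet> z t0" if t: "t0 \<le> t" "t < T0" for t
      proof (rule antimono_by_deriv[where f = "\<lambda>s. z s \<bullet> z s" and f' = "\<lambda>s. 2 * (z s \<bullet> ((- A s) *\<^sub>R z s))"
            and a = t0 and b = T0])
        fix u assume u: "u \<in> {t0..<T0}"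
        show "((\<lambda>s. z s \<bullet> z s) has_real_derivative 2 * (z u \<bullet> (- A u) *\<^sub>R z u)) (at u within {t0..<T0})"
          by (rule inner_self_deriv[OF dz[OF u]])
      next
        fix u assume u: "u \<in> {t0..<T0}"
        show "2 * (z u \<bullet> (- A u) *\<^sub>R z u) \<le> 0" using A0[of u] by simp
      qed (use t in auto)
      have z0: "z t0 = 0" unfolding z_def using w_init[OF pN] w_init[OF qN] veq[of t0] t0 by simp
      have "eventually (\<lambda>t. w t p - w t q = 0) (at_left T0)"
      proof (rule eventually_at_leftI[of t0])
        fix t assume "t \<in> {t0<..<T0}"
        then have "z t \<bullet> z t \<le> 0" using zz[of t] z0 by simp
        then show "w t p - w t q = 0" unfolding z_def by (metis antisym inner_ge_zero inner_eq_zero_iff)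
      qed (rule tT)
      then show ?thesis unfolding Q_def by (rule tendsto_eventually)
    next
      case True
      then have inf0: "\<forall>t<T0. (\<integral>\<^sup>+ s\<in>{t..T0}. ennreal (psi \<alpha> (norm (x s p - x s q))) \<partial>lborel) = \<infinity>"
        using ds unfolding dsim_def by auto
      have comp: "((\<lambda>t. w t p $ c - w t q $ c) \<longlongrightarrow> 0) (at_left T0)" for c
      proof -
        define yy where "yy k t = w t k $ c" for k t
        define aa where "aa k l t = 1 / real N * psi \<alpha> (norm (x t k - x t l))" for k l t
        have "cons yy aa (?cls p) t0 T0"
        proof (rule cons.intro)
          show "finite (?cls p)" by (rule fin_cls)
          show "t0 < T0" by (rule tT)
          show "\<And>k l t. 0 \<le> aa k l t" unfolding aa_def using psi_nn Npos by simp
          show "\<And>k l t. aa k l t = aa l k t" unfolding aa_def by (metis norm_minus_commute)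
          fix k t assume k: "k \<in> ?cls p" and t: "t \<in> {t0..<T0}"
          have kN: "k < N" using k unfolding cls_def by simp
          have clsk: "?cls k = ?cls p" 
          proof -
            have "?cs p k" using k unfolding cls_def by simp
            then show ?thesis using cls_eq[of p k] by simp
          qed
          have "((\<lambda>s. w s k $ c) has_vector_derivative
              ((1 / real N) *\<^sub>R (\<Sum>l\<in>?cls k. psi \<alpha> (norm (x t k - x t l)) *\<^sub>R (w t l - w t k))) $ c)
              (at t within {t0..<T0})"
            by (rule bounded_linear.has_vector_derivative[OF bounded_linear_vec_nth w_ode[OF kN t]])
          moreover have "((1 / real N) *\<^sub>R (\<Sum>l\<in>?cls k. psi \<alpha> (norm (x t k - x t l)) *\<^sub>R (w t l - w t k))) $ c
              = (\<Sum>l\<in>?cls p. aa k l t * (yy l t - yy k t))"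
            unfolding clsk aa_def yy_def by (simp add: sum_distrib_left mult.assoc)
          ultimately show "(yy k has_real_derivative (\<Sum>l\<in>?cls p. aa k l t * (yy l t - yy k t))) (at t within {t0..<T0})"
            unfolding yy_def by (simp add: has_real_derivative_iff_has_vector_derivative)
        qed
        then interpret cs: cons yy aa "?cls p" t0 T0 .
        have pC: "p \<in> ?cls p" unfolding cls_def using pN cs_refl by simp
        have qC: "q \<in> ?cls p" unfolding cls_def using qN cspq by simp
        have "\<forall>k\<in>?cls p. \<exists>l. (yy k \<longlongrightarrow> l) (at_left T0)" using cs.y_conv by blast
        from bchoice[OF this] obtain lim where lim0: "\<forall>k\<in>?cls p. (yy k \<longlongrightarrow> lim k) (at_left T0)" by blast
        have lim: "\<And>k. k \<in> ?cls p \<Longrightarrow> (yy k \<longlongrightarrow> lim k) (at_left T0)" using lim0 by blast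
        have contpq: "continuous_on {t0..<T0} (aa p q)"
        proof -
          have cc: "continuous_on {t0..<T0} (\<lambda>t. 1 / real N * (norm (x t p - x t q)) powr (- \<alpha>))"
          proof (intro continuous_intros)
            show "continuous_on {t0..<T0} (\<lambda>t. x t p)" by (rule continuous_on_subset[OF x_cont[OF pN]]) (use t0 in auto)
            show "continuous_on {t0..<T0} (\<lambda>t. x t q)" by (rule continuous_on_subset[OF x_cont[OF qN]]) (use t0 in auto)
          qed (use pos[OF pN True] t0 in auto)
          show ?thesis
          proof (rule continuous_on_eq[OF cc])
            fix t assume "t \<in> {t0..<T0}"
            then show "1 / real N * (norm (x t p - x t q)) powr (- \<alpha>) = aa p q t"
              unfolding aa_def psi_def using pos[OF pN True, of t] t0 by auto
          qed
        qed
        have "lim p = lim q"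
        proof (rule cs.same_limit[OF pC qC lim contpq, of "real N"])
          show "0 < real N" by (rule Npos)
          fix t1 assume "t0 \<le> t1" "t1 < T0"
          then show "(\<integral>\<^sup>+ s\<in>{t1..T0}. ennreal (real N * aa p q s) \<partial>lborel) = \<infinity>"
          proof -
            have "\<And>s. real N * aa p q s = psi \<alpha> (norm (x s p - x s q))" unfolding aa_def using Npos by simp
            then show ?thesis using inf0 \<open>t1 < T0\<close> by presburger
          qed
        qed
        moreover have "((\<lambda>t. yy p t - yy q t) \<longlongrightarrow> lim p - lim q) (at_left T0)"
          by (intro tendsto_diff lim pC qC)
        ultimately show ?thesis unfolding yy_def by simp
      qed
      show ?thesis unfolding Q_def by (rule vec_tendstoI) (use comp in simp)
    qed
  qed
  have "Q i j" using ij(3) unfolding csim_def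
  proof (induction rule: equivclp_induct)
    case base
    then show ?case unfolding Q_def by simp
  next
    case (step y z)
    have "Q y z"
    proof (cases "?ds y z")
      case True then show ?thesis by (rule dsQ)
    next
      case False
      then have "?ds z y" using step.hyps(2) by simp
      then have "Q z y" by (rule dsQ)
      then have "((\<lambda>t. - (w t z - w t y)) \<longlongrightarrow> - 0) (at_left T0)" unfolding Q_def by (rule tendsto_minus)
      then show ?thesis unfolding Q_def by simp
    qed
    from tendsto_add[OF step.IH[unfolded Q_def] this[unfolded Q_def]]
    show ?case unfolding Q_def by simp
  qed
  then show ?thesis unfolding Q_def by (rule tendsto_norm_zero)
qed


end
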